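(* Let $\alpha\ge\aleph_0$ be a cardinal, let $X$ be a commutative topological $\alpha$-generated algebra over $\mathbb{K}$ which is first-countable, and let $M\subset X$. Then $M$ is $\alpha$-infinitely strongly $\alpha$-dense-algebrable if and only if $M$ is strongly $\alpha$-dense-algebrable.
   Context: Algebras are associative linear algebras over $\mathbb{K}$ ($\mathbb{R}$ or $\mathbb{C}$); a topological algebra has continuous sum, product and scalar multiplication. An algebra is $\alpha$-generated if $\alpha$ is the smallest cardinality of a subset generating it as an algebra. $\langle S\rangle$ is the subalgebra generated by $S$. With $\mathbb{P}_n$ the polynomials in $n$ variables without constant term, $S$ is a set of free generators (SFG) if $P(x_1,\dots,x_n)\neq0$ for every $n$, every non-zero $P\in\mathbb{P}_n$ and all pairwise distinct $x_1,\dots,x_n\in S$. An $\alpha$-generated free subalgebra is $\langle F\rangle$ with $F$ an SFG of cardinality $\alpha$. $M$ is strongly $\alpha$-dense-algebrable if $M\cup\{0\}$ contains a dense $\alpha$-generated free subalgebra of $X$; $M$ is $\alpha$-infinitely strongly $\alpha$-dense-algebrable if there is a family $\{Y_\kappa\}_{\kappa<\alpha}$ of dense $\alpha$-generated free subalgebras of $X$ with $Y_\kappa\subset M\cup\{0\}$ and $Y_{\kappa_1}\cap Y_{\kappa_2}=\{0\}$ for $\kappa_1\neq\kappa_2$. *)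

theory Defs
  imports "HOL-Analysis.Analysis" "HOL-Library.Equipollence" "HOL-Library.Multiset"
begin

text \<open>The algebra X is the whole type 'a (associative, commutative, not necessarily unital:
  class comm_ring). The scalar field K is a subset of the complex numbers,
  K = \<real> or K = UNIV, and sm is the scalar multiplication (only relevant on K).\<close>

definition topological_algebra :: "complex set \<Rightarrow> (complex \<Rightarrow> 'a::{comm_ring,topological_space} \<Rightarrow> 'a) \<Rightarrow> bool" where
  "topological_algebra K sm \<longleftrightarrow>
     (\<forall>a\<in>K. \<forall>b\<in>K. \<forall>x. sm (a + b) x = sm a x + sm b x) \<and>
     (\<forall>a\<in>K. \<forall>x y. sm a (x + y) = sm a x + sm a y) \<and>
     (\<forall>a\<in>K. \<forall>b\<in>K. \<forall>x. sm (a * b) x = sm a (sm b x)) \<and>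
     (\<forall>x. sm 1 x = x) \<and>
     (\<forall>a\<in>K. \<forall>x y. sm a (x * y) = sm a x * y \<and> sm a (x * y) = x * sm a y) \<and>
     continuous_on UNIV (\<lambda>p::'a \<times> 'a. fst p + snd p) \<and>
     continuous_on UNIV (\<lambda>p::'a \<times> 'a. fst p * snd p) \<and>
     continuous_on (K \<times> UNIV) (\<lambda>p::complex \<times> 'a. sm (fst p) (snd p))"

definition is_subalg :: "complex set \<Rightarrow> (complex \<Rightarrow> 'a \<Rightarrow> 'a) \<Rightarrow> 'a::comm_ring set \<Rightarrow> bool" where
  "is_subalg K sm B \<longleftrightarrow> 0 \<in> B \<and>
     (\<forall>x\<in>B. \<forall>y\<in>B. x + y \<in> B \<and> x - y \<in> B \<and> x * y \<in> B) \<and>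
     (\<forall>c\<in>K. \<forall>x\<in>B. sm c x \<in> B)"

definition gen_alg :: "complex set \<Rightarrow> (complex \<Rightarrow> 'a \<Rightarrow> 'a) \<Rightarrow> 'a::comm_ring set \<Rightarrow> 'a set" where
  "gen_alg K sm S = \<Inter>{B. S \<subseteq> B \<and> is_subalg K sm B}"

text \<open>X is alpha-generated, the cardinal alpha being represented by the set A.\<close>
definition alpha_generated :: "complex set \<Rightarrow> (complex \<Rightarrow> 'a::comm_ring \<Rightarrow> 'a) \<Rightarrow> 'i set \<Rightarrow> bool" where
  "alpha_generated K sm A \<longleftrightarrow>
     (\<exists>G::'a set. gen_alg K sm G = UNIV \<and> G \<approx> A) \<and>
     (\<forall>G::'a set. gen_alg K sm G = UNIV \<longrightarrow> A \<lesssim> G)"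

fun lprod :: "'a::semigroup_mult list \<Rightarrow> 'a" where
  "lprod [] = undefined"
| "lprod [x] = x"
| "lprod (x # y # ys) = x * lprod (y # ys)"

definition monom_eval :: "(nat \<Rightarrow> 'a::comm_ring) \<Rightarrow> nat multiset \<Rightarrow> 'a" where
  "monom_eval x m = lprod (map x (sorted_list_of_multiset m))"

text \<open>A polynomial in P_n (n variables, coefficients in K, no constant term) is given by a
  finite set S of non-constant monomials in the variables 0..n-1 and coefficients c on S.\<close>
definition is_poly_n :: "complex set \<Rightarrow> nat \<Rightarrow> nat multiset set \<Rightarrow> (nat multiset \<Rightarrow> complex) \<Rightarrow> bool" where
  "is_poly_n K n S c \<longleftrightarrow> finite S \<and> (\<forall>m\<in>S. m \<noteq> {#} \<and> set_mset m \<subseteq> {..<n} \<and> c m \<in> K)"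

definition poly_nonzero :: "nat multiset set \<Rightarrow> (nat multiset \<Rightarrow> complex) \<Rightarrow> bool" where
  "poly_nonzero S c \<longleftrightarrow> (\<exists>m\<in>S. c m \<noteq> 0)"

definition poly_eval :: "(complex \<Rightarrow> 'a \<Rightarrow> 'a) \<Rightarrow> nat multiset set \<Rightarrow> (nat multiset \<Rightarrow> complex)
    \<Rightarrow> (nat \<Rightarrow> 'a::comm_ring) \<Rightarrow> 'a" where
  "poly_eval sm S c x = (\<Sum>m\<in>S. sm (c m) (monom_eval x m))"

definition SFG :: "complex set \<Rightarrow> (complex \<Rightarrow> 'a \<Rightarrow> 'a) \<Rightarrow> 'a::comm_ring set \<Rightarrow> bool" where
  "SFG K sm F \<longleftrightarrow>
     (\<forall>n S c x. is_poly_n K n S c \<and> poly_nonzero S c \<and> inj_on x {..<n} \<and> x ` {..<n} \<subseteq> F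
        \<longrightarrow> poly_eval sm S c x \<noteq> 0)"

definition dense_free_subalg :: "complex set \<Rightarrow> (complex \<Rightarrow> 'a::{comm_ring,topological_space} \<Rightarrow> 'a) \<Rightarrow> 'i set \<Rightarrow> 'a set \<Rightarrow> bool" where
  "dense_free_subalg K sm A Y \<longleftrightarrow>
     (\<exists>F::'a set. SFG K sm F \<and> F \<approx> A \<and> Y = gen_alg K sm F) \<and>
     closure Y = UNIV"

definition strongly_dense_algebrable :: "complex set \<Rightarrow> (complex \<Rightarrow> 'a::{comm_ring,topological_space} \<Rightarrow> 'a) \<Rightarrow> 'i set \<Rightarrow> 'a set \<Rightarrow> bool" where
  "strongly_dense_algebrable K sm A M \<longleftrightarrow>
     (\<exists>Y::'a set. dense_free_subalg K sm A Y \<and> Y \<subseteq> M \<union> {0})"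

definition inf_strongly_dense_algebrable :: "complex set \<Rightarrow> (complex \<Rightarrow> 'a::{comm_ring,topological_space} \<Rightarrow> 'a) \<Rightarrow> 'i set \<Rightarrow> 'a set \<Rightarrow> bool" where
  "inf_strongly_dense_algebrable K sm A M \<longleftrightarrow>
     (\<exists>Y :: 'i \<Rightarrow> 'a set.
        (\<forall>k\<in>A. dense_free_subalg K sm A (Y k) \<and> Y k \<subseteq> M \<union> {0}) \<and>
        (\<forall>k1\<in>A. \<forall>k2\<in>A. k1 \<noteq> k2 \<longrightarrow> Y k1 \<inter> Y k2 = {0}))"

end

theory Submission
  imports Defs "HOL-Library.Poly_Mapping"
begin

definition mstep :: "('v \<Rightarrow> 'b::comm_ring) \<Rightarrow> 'v \<Rightarrow> 'b option \<Rightarrow> 'b option" where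
  "mstep x v o' = Some (case o' of None \<Rightarrow> x v | Some r \<Rightarrow> x v * r)"

interpretation mstep_cfc: comp_fun_commute "mstep x"
  by unfold_locales (auto simp: mstep_def fun_eq_iff mult.left_commute mult.commute split: option.splits)

definition mevo :: "('v \<Rightarrow> 'b::comm_ring) \<Rightarrow> 'v multiset \<Rightarrow> 'b option" where
  "mevo x m = fold_mset (mstep x) None m"

definition mev :: "('v \<Rightarrow> 'b::comm_ring) \<Rightarrow> 'v multiset \<Rightarrow> 'b" where
  "mev x m = the (mevo x m)"

lemma mevo_empty[simp]: "mevo x {#} = None" by (simp add: mevo_def)
lemma mevo_add[simp]: "mevo x (add_mset v m) = mstep x v (mevo x m)"
  by (simp add: mevo_def)
lemma mevo_None: "mevo x m = None \<longleftrightarrow> m = {#}"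
  by (cases m) (auto simp: mstep_def)

lemma mev_single[simp]: "mev x {#v#} = x v"
  by (simp add: mev_def mstep_def)

lemma mev_add_mset: "m \<noteq> {#} \<Longrightarrow> mev x (add_mset v m) = x v * mev x m"
  using mevo_None[of x m] by (auto simp: mev_def mstep_def split: option.splits)

lemma mev_plus: "m1 \<noteq> {#} \<Longrightarrow> m2 \<noteq> {#} \<Longrightarrow> mev x (m1 + m2) = mev x m1 * mev x m2"
proof (induction m1)
  case empty then show ?case by simp
next
  case (add v m1)
  show ?case
  proof (cases "m1 = {#}")
    case True then show ?thesis using add True by (simp add: mev_add_mset)
  next
    case False
    then show ?thesis using add by (simp add: mev_add_mset mult.assoc)
  qed
qed

lemma mev_cong: "(\<And>v. v \<in># m \<Longrightarrow> x v = y v) \<Longrightarrow> mev x m = mev y m"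
proof -
  assume h: "\<And>v. v \<in># m \<Longrightarrow> x v = y v"
  have "mevo x m = mevo y m" using h
    by (induction m) (auto simp: mstep_def split: option.splits)
  then show ?thesis by (simp add: mev_def)
qed

lemma lprod_insort: "xs \<noteq> [] \<Longrightarrow> lprod (map x (insort a xs)) = (x a :: 'b::comm_ring) * lprod (map x xs)"
proof (induction xs)
  case Nil then show ?case by simp
next
  case (Cons b xs)
  show ?case
  proof (cases xs)
    case Nil then show ?thesis by (auto simp: mult.commute)
  next
    case (Cons c ys)
    then show ?thesis using Cons.IH
      by (auto simp: mult.left_commute)
  qed
qed

lemma monom_eval_mev: "m \<noteq> {#} \<Longrightarrow> monom_eval x m = mev x (m::nat multiset)"
proof (induction m)
  case empty then show ?case by simp
next
  case (add a m)
  show ?case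
  proof (cases "m = {#}")
    case True then show ?thesis by (simp add: monom_eval_def)
  next
    case False
    then have "sorted_list_of_multiset m \<noteq> []"
      by (metis mset_sorted_list_of_multiset mset.simps(1))
    then show ?thesis using add False
      by (simp add: monom_eval_def lprod_insort mev_add_mset)
  qed
qed

definition laws :: "('c::comm_ring_1 \<Rightarrow> 'b::comm_ring \<Rightarrow> 'b) \<Rightarrow> bool" where
  "laws s \<longleftrightarrow> (\<forall>a b x. s (a+b) x = s a x + s b x) \<and> (\<forall>a x y. s a (x+y) = s a x + s a y) \<and>
     (\<forall>a b x. s (a*b) x = s a (s b x)) \<and> (\<forall>x. s 1 x = x) \<and>
     (\<forall>a x y. s a (x*y) = s a x * y) \<and> (\<forall>a x y. s a (x*y) = x * s a y)"

lemma laws_D: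
  assumes "laws s"
  shows "s (a+b) x = s a x + s b x" "s a (x+y) = s a x + s a y" "s (a*b) x = s a (s b x)"
    "s 1 x = x" "s a (x*y) = s a x * y" "s a (x*y) = x * s a y"
  using assms by (auto simp: laws_def)

lemma laws_zero:
  assumes "laws s" shows "s 0 x = 0" "s a 0 = 0"
proof -
  have "s (0+0) x = s 0 x + s 0 x" using laws_D(1)[OF assms] .
  then show "s 0 x = 0" by simp
  have "s a (0+0) = s a 0 + s a 0" using laws_D(2)[OF assms] .
  then show "s a 0 = 0" by simp
qed

lemma laws_sum_left:
  assumes "laws s" shows "s (\<Sum>i\<in>I. f i) x = (\<Sum>i\<in>I. s (f i) x)"
  by (induction I rule: infinite_finite_induct) (auto simp: laws_zero[OF assms] laws_D[OF assms])

lemma laws_sum_right: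
  assumes "laws s" shows "s a (\<Sum>i\<in>I. f i) = (\<Sum>i\<in>I. s a (f i))"
  by (induction I rule: infinite_finite_induct) (auto simp: laws_zero[OF assms] laws_D[OF assms])

lemma laws_minus:
  assumes "laws s" shows "s (a - b) x = s a x - s b x" "s a (x - y) = s a x - s a y"
proof -
  have "s (a - b + b) x = s (a-b) x + s b x" using laws_D(1)[OF assms] .
  then show "s (a - b) x = s a x - s b x" by (simp add: algebra_simps)
  have "s a (x - y + y) = s a (x-y) + s a y" using laws_D(2)[OF assms] .
  then show "s a (x - y) = s a x - s a y" by (simp add: algebra_simps)
qed

type_synonym ('v,'c) fp = "'v multiset \<Rightarrow>\<^sub>0 'c"

definition cf :: "('v multiset \<Rightarrow>\<^sub>0 'c::zero) \<Rightarrow> bool" where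
  "cf p \<longleftrightarrow> Poly_Mapping.lookup p {#} = 0"

definition vars :: "('v multiset \<Rightarrow>\<^sub>0 'c::zero) \<Rightarrow> 'v set" where
  "vars p = (\<Union>m\<in>Poly_Mapping.keys p. set_mset m)"

definition ev :: "('c::comm_ring_1 \<Rightarrow> 'b::comm_ring \<Rightarrow> 'b) \<Rightarrow> ('v \<Rightarrow> 'b) \<Rightarrow> ('v multiset \<Rightarrow>\<^sub>0 'c) \<Rightarrow> 'b" where
  "ev s x p = (\<Sum>m\<in>Poly_Mapping.keys p - {{#}}. s (Poly_Mapping.lookup p m) (mev x m))"

definition smR :: "'c::comm_ring_1 \<Rightarrow> ('v multiset \<Rightarrow>\<^sub>0 'c) \<Rightarrow> ('v multiset \<Rightarrow>\<^sub>0 'c)" where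
  "smR a p = Poly_Mapping.single {#} a * p"

definition Var :: "'v \<Rightarrow> ('v multiset \<Rightarrow>\<^sub>0 'c::comm_ring_1)" where
  "Var v = Poly_Mapping.single {#v#} 1"

lemma lookup_smR[simp]: "Poly_Mapping.lookup (smR a p) k = a * Poly_Mapping.lookup p k"
  unfolding smR_def mult_map_scale_conv_mult[symmetric]
  by (simp add: map.rep_eq when_def)

lemma laws_smR: "laws smR"
  unfolding laws_def smR_def
  by (auto simp: algebra_simps single_add mult_single)

lemma ev_superset:
  assumes "finite S" "Poly_Mapping.keys p - {{#}} \<subseteq> S" "{#} \<notin> S" "laws s"
  shows "ev s x p = (\<Sum>m\<in>S. s (Poly_Mapping.lookup p m) (mev x m))"
  unfolding ev_def
  by (rule sum.mono_neutral_left) (use assms in \<open>auto simp: laws_zero in_keys_iff\<close>)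

lemma ev_zero[simp]: "ev s x 0 = 0" by (simp add: ev_def)

lemma ev_add:
  assumes "laws s" shows "ev s x (p + q) = ev s x p + ev s x q"
proof -
  let ?S = "(Poly_Mapping.keys p \<union> Poly_Mapping.keys q) - {{#}}"
  have "ev s x (p+q) = (\<Sum>m\<in>?S. s (Poly_Mapping.lookup (p+q) m) (mev x m))"
    by (rule ev_superset) (use assms keys_add[of p q] in auto)
  also have "\<dots> = (\<Sum>m\<in>?S. s (Poly_Mapping.lookup p m) (mev x m)) + (\<Sum>m\<in>?S. s (Poly_Mapping.lookup q m) (mev x m))"
    by (simp add: lookup_add laws_D[OF assms] sum.distrib)
  also have "\<dots> = ev s x p + ev s x q"
    by (subst (1 2) ev_superset[where S="?S"]) (use assms in auto)
  finally show ?thesis .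
qed

lemma ev_minus:
  assumes "laws s" shows "ev s x (p - q) = ev s x p - ev s x q"
  using ev_add[OF assms, of x "p - q" q] by (simp add: algebra_simps)

lemma ev_sum:
  assumes "laws s" shows "ev s x (\<Sum>i\<in>I. f i) = (\<Sum>i\<in>I. ev s x (f i))"
  by (induction I rule: infinite_finite_induct) (auto simp: ev_add[OF assms])

lemma ev_single:
  assumes "laws s" shows "ev s x (Poly_Mapping.single m c) = (if m = {#} then 0 else s c (mev x m))"
  using assms by (cases "c = 0") (auto simp: ev_def laws_zero)

lemma ev_smR:
  assumes "laws s" shows "ev s x (smR a p) = s a (ev s x p)"
proof -
  have "ev s x (smR a p) = (\<Sum>m\<in>Poly_Mapping.keys p - {{#}}. s (Poly_Mapping.lookup (smR a p) m) (mev x m))"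
    by (rule ev_superset) (use assms in \<open>auto simp: in_keys_iff\<close>)
  then show ?thesis
    by (simp add: ev_def laws_sum_right[OF assms] laws_D[OF assms])
qed

lemma poly_expand: "p = (\<Sum>a\<in>Poly_Mapping.keys p. Poly_Mapping.single a (Poly_Mapping.lookup p a))"
  by (rule poly_mapping_eqI) (simp add: lookup_sum lookup_single when_def in_keys_iff)

lemma cf_keys: "cf p \<longleftrightarrow> {#} \<notin> Poly_Mapping.keys p"
  by (simp add: cf_def in_keys_iff)

lemma ev_mult:
  assumes "laws s" "cf p" "cf q"
  shows "ev s x (p * q) = ev s x p * ev s x q"
proof -
  have kp: "{#} \<notin> Poly_Mapping.keys p" "{#} \<notin> Poly_Mapping.keys q" using assms cf_keys by auto
  have "p * q = (\<Sum>a\<in>Poly_Mapping.keys p. Poly_Mapping.single a (Poly_Mapping.lookup p a)) * (\<Sum>b\<in>Poly_Mapping.keys q. Poly_Mapping.single b (Poly_Mapping.lookup q b))"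
    using poly_expand[of p] poly_expand[of q] by simp
  also have "\<dots> = (\<Sum>a\<in>Poly_Mapping.keys p. \<Sum>b\<in>Poly_Mapping.keys q. Poly_Mapping.single (a+b) (Poly_Mapping.lookup p a * Poly_Mapping.lookup q b))"
    by (simp add: sum_product mult_single)
  finally have pq: "p * q = \<dots>" .
  have "ev s x (p*q) = (\<Sum>a\<in>Poly_Mapping.keys p. \<Sum>b\<in>Poly_Mapping.keys q. s (Poly_Mapping.lookup p a * Poly_Mapping.lookup q b) (mev x (a+b)))"
    unfolding pq using kp by (auto simp: ev_sum[OF assms(1)] ev_single[OF assms(1)] intro!: sum.cong)
  also have "\<dots> = (\<Sum>a\<in>Poly_Mapping.keys p. \<Sum>b\<in>Poly_Mapping.keys q. s (Poly_Mapping.lookup p a) (mev x a) * s (Poly_Mapping.lookup q b) (mev x b))"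
  proof (intro sum.cong refl)
    fix a b assume ab: "a \<in> Poly_Mapping.keys p" "b \<in> Poly_Mapping.keys q"
    then have "a \<noteq> {#}" "b \<noteq> {#}" using kp by auto
    then have "mev x (a+b) = mev x a * mev x b" by (rule mev_plus)
    then show "s (Poly_Mapping.lookup p a * Poly_Mapping.lookup q b) (mev x (a + b)) =
          s (Poly_Mapping.lookup p a) (mev x a) * s (Poly_Mapping.lookup q b) (mev x b)"
      using laws_D(3,5,6)[OF assms(1)] by metis
  qed
  also have "\<dots> = (\<Sum>a\<in>Poly_Mapping.keys p. s (Poly_Mapping.lookup p a) (mev x a)) * (\<Sum>b\<in>Poly_Mapping.keys q. s (Poly_Mapping.lookup q b) (mev x b))"
    by (simp add: sum_product)
  also have "\<dots> = ev s x p * ev s x q"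
    using kp by (simp add: ev_def)
  finally show ?thesis .
qed

lemma cf_add: "cf p \<Longrightarrow> cf q \<Longrightarrow> cf (p + q)" by (simp add: cf_def lookup_add)
lemma cf_minus: "cf p \<Longrightarrow> cf q \<Longrightarrow> cf (p - q)" by (simp add: cf_def lookup_minus)
lemma cf_smR: "cf p \<Longrightarrow> cf (smR a p)" by (simp add: cf_def)
lemma cf_Var: "cf (Var v)" by (simp add: cf_def Var_def lookup_single)
lemma cf_zero: "cf 0" by (simp add: cf_def)
lemma cf_mult: "cf p \<Longrightarrow> cf (p * q)"
  using keys_mult[of p q] by (auto simp: cf_keys)
lemma cf_sum: "(\<And>i. i \<in> I \<Longrightarrow> cf (f i)) \<Longrightarrow> cf (\<Sum>i\<in>I. f i)"
  by (induction I rule: infinite_finite_induct) (auto simp: cf_zero cf_add)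

lemma ev_Var: "laws s \<Longrightarrow> ev s x (Var v) = x v"
  by (simp add: Var_def ev_single laws_D)

lemma vars_add: "vars (p + q) \<subseteq> vars p \<union> vars q"
  using keys_add[of p q] by (auto simp: vars_def)
lemma vars_uminus: "vars (- (p::('v,'c::comm_ring_1) fp)) = vars p"
  by (simp add: vars_def)
lemma vars_minus: "vars ((p::('v,'c::comm_ring_1) fp) - q) \<subseteq> vars p \<union> vars q"
  using vars_add[of p "-q"] by (simp add: vars_uminus)
lemma vars_mult: "vars (p * q) \<subseteq> vars p \<union> vars q"
proof
  fix x assume "x \<in> vars (p * q)"
  then obtain m where m: "m \<in> Poly_Mapping.keys (p*q)" "x \<in># m" by (auto simp: vars_def)
  then obtain a b where "m = a + b" "a \<in> Poly_Mapping.keys p" "b \<in> Poly_Mapping.keys q"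
    using keys_mult[of p q] by blast
  then show "x \<in> vars p \<union> vars q" using m(2) by (auto simp: vars_def)
qed
lemma vars_smR: "vars (smR a p) \<subseteq> vars p"
proof
  fix x assume "x \<in> vars (smR a p)"
  then obtain m where m: "m \<in> Poly_Mapping.keys (smR a p)" "x \<in># m" by (auto simp: vars_def)
  then have "m \<in> Poly_Mapping.keys p" by (metis in_keys_iff lookup_smR mult_zero_right)
  then show "x \<in> vars p" using m(2) by (auto simp: vars_def)
qed
lemma vars_Var: "vars (Var v :: ('v,'c::comm_ring_1) fp) = {v}"
  by (simp add: vars_def Var_def)
lemma vars_zero[simp]: "vars 0 = {}" by (simp add: vars_def)
lemma vars_sum: "vars (\<Sum>i\<in>I. f i) \<subseteq> (\<Union>i\<in>I. vars (f i))"
proof (induction I rule: infinite_finite_induct)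
  case (insert x F) then show ?case using vars_add[of "f x" "sum f F"] by auto
qed auto

lemma ev_cong: "(\<And>v. v \<in> vars p \<Longrightarrow> x v = y v) \<Longrightarrow> ev s x p = ev s y p"
  unfolding ev_def by (intro sum.cong refl arg_cong[where f="s _"] mev_cong) (auto simp: vars_def)

lemma cf_mev:
  assumes "\<And>v. cf (l v)" "m \<noteq> {#}"
  shows "cf (mev l m)"
  using assms(2)
proof (induction m)
  case empty then show ?case by simp
next
  case (add v m)
  show ?case
  proof (cases "m = {#}")
    case True then show ?thesis using assms by simp
  next
    case False
    then show ?thesis using add assms by (simp add: mev_add_mset cf_mult)
  qed
qed

lemma ev_mev:
  assumes "laws s" "\<And>v. cf (l v)" "m \<noteq> {#}"
  shows "ev s x (mev l m) = mev (\<lambda>v. ev s x (l v)) m"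
  using assms(3)
proof (induction m)
  case empty then show ?case by simp
next
  case (add v m)
  show ?case
  proof (cases "m = {#}")
    case True then show ?thesis using assms by simp
  next
    case False
    have "ev s x (mev l (add_mset v m)) = ev s x (l v * mev l m)" using False by (simp add: mev_add_mset)
    also have "\<dots> = ev s x (l v) * ev s x (mev l m)"
      by (rule ev_mult[OF assms(1) assms(2) cf_mev[OF assms(2) False]])
    also have "\<dots> = mev (\<lambda>v. ev s x (l v)) (add_mset v m)"
      using add.IH[OF False] False by (simp add: mev_add_mset)
    finally show ?thesis .
  qed
qed

lemma cf_ev_R:
  assumes "\<And>v. cf (l v)" shows "cf (ev smR l p)"
  unfolding ev_def by (intro cf_sum cf_smR cf_mev[OF assms]) auto

lemma ev_comp:
  assumes "laws s" "\<And>v. cf (l v)"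
  shows "ev s x (ev smR l p) = ev s (\<lambda>v. ev s x (l v)) p"
proof -
  have h: "\<And>m. m \<noteq> {#} \<Longrightarrow> ev s x (mev l m) = mev (\<lambda>v. ev s x (l v)) m"
    by (rule ev_mev[OF assms])
  have "ev s x (ev smR l p) = (\<Sum>m\<in>Poly_Mapping.keys p - {{#}}. s (Poly_Mapping.lookup p m) (ev s x (mev l m)))"
    unfolding ev_def[of smR] by (simp add: ev_sum[OF assms(1)] ev_smR[OF assms(1)])
  also have "\<dots> = ev s (\<lambda>v. ev s x (l v)) p"
    unfolding ev_def[of s "\<lambda>v. ev s x (l v)"] by (intro sum.cong refl) (simp add: h)
  finally show ?thesis .
qed

lemma vars_mev_R: "m \<noteq> {#} \<Longrightarrow> vars (mev l m) \<subseteq> (\<Union>v\<in>set_mset m. vars (l v))"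
proof (induction m)
  case empty then show ?case by simp
next
  case (add v m)
  then show ?case
    by (cases "m = {#}") (use vars_mult[of "l v" "mev l m"] in \<open>auto simp: mev_add_mset\<close>)
qed

lemma vars_ev_R: "vars (ev smR l p) \<subseteq> (\<Union>v\<in>vars p. vars (l v))"
proof -
  have "vars (ev smR l p) \<subseteq> (\<Union>m\<in>Poly_Mapping.keys p - {{#}}. vars (smR (Poly_Mapping.lookup p m) (mev l m)))"
    unfolding ev_def by (rule vars_sum)
  also have "\<dots> \<subseteq> (\<Union>v\<in>vars p. vars (l v))"
  proof (intro UN_least)
    fix m assume m: "m \<in> Poly_Mapping.keys p - {{#}}"
    have "vars (smR (Poly_Mapping.lookup p m) (mev l m)) \<subseteq> vars (mev l m)" by (rule vars_smR)
    also have "\<dots> \<subseteq> (\<Union>v\<in>set_mset m. vars (l v))" using m by (intro vars_mev_R) blast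
    also have "\<dots> \<subseteq> (\<Union>v\<in>vars p. vars (l v))" using m unfolding vars_def by blast
    finally show "vars (smR (Poly_Mapping.lookup p m) (mev l m)) \<subseteq> (\<Union>v\<in>vars p. vars (l v))" .
  qed
  finally show ?thesis .
qed

lemma mev_Var: "m \<noteq> {#} \<Longrightarrow> mev Var m = Poly_Mapping.single m (1::'c::comm_ring_1)"
proof (induction m)
  case empty then show ?case by simp
next
  case (add v m)
  show ?case
  proof (cases "m = {#}")
    case True then show ?thesis by (simp add: Var_def)
  next
    case False
    then have "mev Var (add_mset v m) = Var v * mev Var m" by (rule mev_add_mset)
    also have "\<dots> = Poly_Mapping.single {#v#} 1 * Poly_Mapping.single m (1::'c)"
      by (simp only: Var_def[of v] add.IH[OF False])
    also have "\<dots> = Poly_Mapping.single ({#v#} + m) 1" by (simp only: mult_single mult_1)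
    also have "{#v#} + m = add_mset v m" by (metis add.commute add_mset_add_single)
    finally show ?thesis .
  qed
qed

lemma ev_Var_id:
  assumes "cf p" shows "ev smR Var p = p"
proof -
  have "ev smR Var p = (\<Sum>m\<in>Poly_Mapping.keys p - {{#}}. Poly_Mapping.single m (Poly_Mapping.lookup p m))"
    unfolding ev_def by (intro sum.cong refl) (auto simp: mev_Var smR_def mult_single)
  also have "\<dots> = (\<Sum>m\<in>Poly_Mapping.keys p. Poly_Mapping.single m (Poly_Mapping.lookup p m))"
    using assms by (simp add: cf_keys)
  also have "\<dots> = p" using poly_expand[of p] by simp
  finally show ?thesis .
qed

lemma ev_rename:
  assumes "laws s" shows "ev s x (ev smR (\<lambda>v. Var (f v)) p) = ev s (\<lambda>v. x (f v)) p"
  by (simp add: ev_comp[OF assms] cf_Var ev_Var[OF assms])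

lemma rename_back:
  assumes "cf p" "\<And>v. v \<in> vars p \<Longrightarrow> g (f v) = v"
  shows "ev smR (\<lambda>v. Var (g v)) (ev smR (\<lambda>v. Var (f v)) p) = p"
proof -
  have "ev smR (\<lambda>v. Var (g v)) (ev smR (\<lambda>v. Var (f v)) p) = ev smR (\<lambda>v. Var (g (f v))) p"
    by (rule ev_rename[OF laws_smR])
  also have "\<dots> = ev smR Var p" by (rule ev_cong) (simp add: assms(2))
  also have "\<dots> = p" by (rule ev_Var_id[OF assms(1)])
  finally show ?thesis .
qed

lemma vars_rename: "vars (ev smR (\<lambda>v. Var (f v)) p :: ('w,'c::comm_ring_1) fp) \<subseteq> f ` vars p"
  using vars_ev_R[of "\<lambda>v. Var (f v)" p] by (auto simp: vars_Var)

lemma cf_rename: "cf (ev smR (\<lambda>v. Var (f v)) p)"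
  by (rule cf_ev_R) (rule cf_Var)

lemma finite_vars: "finite (vars p)"
  by (simp add: vars_def)

lemma gen_alg_subalg: "is_subalg K sm (gen_alg K sm G)"
  unfolding gen_alg_def is_subalg_def by auto

lemma gen_alg_sub: "G \<subseteq> gen_alg K sm G"
  unfolding gen_alg_def by auto

lemma gen_alg_min: "is_subalg K sm B \<Longrightarrow> G \<subseteq> B \<Longrightarrow> gen_alg K sm G \<subseteq> B"
  unfolding gen_alg_def by auto

locale setting =
  fixes K :: "complex set" and sm :: "complex \<Rightarrow> 'a::{comm_ring,first_countable_topology} \<Rightarrow> 'a"
    and emb :: "'c::field_char_0 \<Rightarrow> complex"
  assumes TA: "topological_algebra K sm"
    and emb_add: "\<And>a b. emb (a + b) = emb a + emb b"
    and emb_mult: "\<And>a b. emb (a * b) = emb a * emb b"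
    and emb_one: "emb 1 = 1"
    and emb_inj: "inj emb"
    and K_eq: "K = range emb"
    and emb_frac: "\<And>n. emb (1 / (of_nat n + 2)) = complex_of_real (1 / (real n + 2))"
begin

definition smc :: "'c \<Rightarrow> 'a \<Rightarrow> 'a" where "smc a x = sm (emb a) x"

lemma emb_zero: "emb 0 = 0"
  using emb_add[of 0 0] by simp

lemma laws_smc: "laws smc"
  using TA unfolding topological_algebra_def laws_def smc_def K_eq
  by (simp add: emb_add emb_mult emb_one) metis

lemma emb_inv: "c \<in> K \<Longrightarrow> emb (inv emb c) = c"
  using K_eq by (simp add: f_inv_into_f)

definition Pol :: "'a set \<Rightarrow> 'a set" where
  "Pol G = {ev smc id p | p. cf p \<and> vars p \<subseteq> G}"

lemma Pol_subalg: "is_subalg K sm (Pol G)"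
  unfolding is_subalg_def
proof (intro conjI ballI)
  show "0 \<in> Pol G" unfolding Pol_def by (rule CollectI, rule exI[of _ 0]) (simp add: cf_zero)
next
  fix x y assume "x \<in> Pol G" "y \<in> Pol G"
  then obtain p q where p: "x = ev smc id p" "cf p" "vars p \<subseteq> G" and q: "y = ev smc id q" "cf q" "vars q \<subseteq> G"
    unfolding Pol_def by blast
  show "x + y \<in> Pol G" unfolding Pol_def
    by (rule CollectI, rule exI[of _ "p + q"]) (use p q vars_add[of p q] in \<open>auto simp: ev_add[OF laws_smc] cf_add\<close>)
  show "x - y \<in> Pol G" unfolding Pol_def
    by (rule CollectI, rule exI[of _ "p - q"]) (use p q vars_minus[of p q] in \<open>auto simp: ev_minus[OF laws_smc] cf_minus\<close>)
  show "x * y \<in> Pol G" unfolding Pol_def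
    by (rule CollectI, rule exI[of _ "p * q"]) (use p q vars_mult[of p q] in \<open>auto simp: ev_mult[OF laws_smc] cf_mult\<close>)
next
  fix c x assume c: "c \<in> K" and "x \<in> Pol G"
  then obtain p where p: "x = ev smc id p" "cf p" "vars p \<subseteq> G" unfolding Pol_def by blast
  show "sm c x \<in> Pol G" unfolding Pol_def
    by (rule CollectI, rule exI[of _ "smR (inv emb c) p"])
       (use p vars_smR[of "inv emb c" p] c in \<open>auto simp: ev_smR[OF laws_smc] cf_smR smc_def emb_inv\<close>)
qed

lemma G_Pol: "G \<subseteq> Pol G"
proof
  fix g assume "g \<in> G"
  then show "g \<in> Pol G" unfolding Pol_def
    by (intro CollectI exI[of _ "Var g"]) (simp add: ev_Var[OF laws_smc] cf_Var vars_Var)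
qed

lemma gen_alg_Pol: "gen_alg K sm G \<subseteq> Pol G"
  by (rule gen_alg_min[OF Pol_subalg G_Pol])

definition free :: "'a set \<Rightarrow> bool" where
  "free G \<longleftrightarrow> (\<forall>p :: ('a,'c) fp. cf p \<and> vars p \<subseteq> G \<and> ev smc id p = 0 \<longrightarrow> p = 0)"

lemma poly_eval_ev:
  assumes "finite S" "Poly_Mapping.keys q - {{#}} \<subseteq> S" "{#} \<notin> S"
    "\<And>m. m \<in> S \<Longrightarrow> c m = emb (Poly_Mapping.lookup q m)"
  shows "poly_eval sm S c x = ev smc x q"
proof -
  have "ev smc x q = (\<Sum>m\<in>S. smc (Poly_Mapping.lookup q m) (mev x m))"
    by (rule ev_superset) (use assms laws_smc in auto)
  also have "\<dots> = poly_eval sm S c x"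
    unfolding poly_eval_def smc_def
  proof (intro sum.cong refl)
    fix m assume m: "m \<in> S"
    then have "m \<noteq> {#}" using assms(3) by auto
    then show "sm (emb (Poly_Mapping.lookup q m)) (mev x m) = sm (c m) (monom_eval x m)"
      using assms(4)[OF m] by (simp add: monom_eval_mev)
  qed
  finally show ?thesis by simp
qed

lemma SFG_free:
  assumes "SFG K sm F" shows "free F"
  unfolding free_def
proof (intro allI impI)
  fix p :: "('a,'c) fp" assume H: "cf p \<and> vars p \<subseteq> F \<and> ev smc id p = 0"
  define V where "V = vars p"
  define n where "n = card V"
  have "finite V" by (simp add: V_def finite_vars)
  then obtain x where bx: "bij_betw x {0..<n} V" using ex_bij_betw_nat_finite n_def by blast
  then have bx': "bij_betw x {..<n} V" by (simp add: atLeast0LessThan)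
  define y where "y = inv_into {..<n} x"
  have xy: "x (y v) = v" if "v \<in> V" for v
    using bx' that unfolding y_def by (simp add: bij_betw_def f_inv_into_f)
  have yx: "y (x i) = i" if "i < n" for i
    using bx' that unfolding y_def by (simp add: bij_betw_def inv_into_f_f)
  have yV: "y v < n" if "v \<in> V" for v
    using bx' that unfolding y_def by (metis bij_betw_def inv_into_into lessThan_iff)
  define q :: "(nat,'c) fp" where "q = ev smR (\<lambda>v. Var (y v)) p"
  have cfq: "cf q" unfolding q_def by (rule cf_rename)
  have vq: "vars q \<subseteq> {..<n}" using vars_rename[of y p] yV unfolding q_def V_def by auto
  have evq: "ev smc x q = 0"
  proof -
    have "ev smc x q = ev smc (\<lambda>v. x (y v)) p" unfolding q_def by (rule ev_rename[OF laws_smc])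
    also have "\<dots> = ev smc id p" by (rule ev_cong) (simp add: xy V_def)
    finally show ?thesis using H by simp
  qed
  have pback: "ev smR (\<lambda>v. Var (x v)) q = p"
    unfolding q_def by (rule rename_back) (use H xy V_def in auto)
  show "p = 0"
  proof (rule ccontr)
    assume "p \<noteq> 0"
    then have "q \<noteq> 0" using pback by auto
    then obtain m where m: "m \<in> Poly_Mapping.keys q" by (metis keys_eq_empty ex_in_conv)
    have ip: "is_poly_n K n (Poly_Mapping.keys q) (\<lambda>m. emb (Poly_Mapping.lookup q m))"
      unfolding is_poly_n_def
    proof (intro conjI ballI)
      fix m assume m: "m \<in> Poly_Mapping.keys q"
      show "m \<noteq> {#}" using m cfq cf_keys by auto
      show "set_mset m \<subseteq> {..<n}" using m vq unfolding vars_def by auto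
      show "emb (Poly_Mapping.lookup q m) \<in> K" using K_eq by auto
    qed simp
    have nz: "poly_nonzero (Poly_Mapping.keys q) (\<lambda>m. emb (Poly_Mapping.lookup q m))"
      unfolding poly_nonzero_def using m emb_inj emb_zero
      by (metis in_keys_iff injD)
    have inj: "inj_on x {..<n}" using bx' bij_betw_def by blast
    have "x ` {..<n} = V" using bx' by (simp add: bij_betw_def)
    then have img: "x ` {..<n} \<subseteq> F" using H unfolding V_def by simp
    have "poly_eval sm (Poly_Mapping.keys q) (\<lambda>m. emb (Poly_Mapping.lookup q m)) x \<noteq> 0"
      using assms ip nz inj img unfolding SFG_def by blast
    moreover have "poly_eval sm (Poly_Mapping.keys q) (\<lambda>m. emb (Poly_Mapping.lookup q m)) x = ev smc x q"
      by (rule poly_eval_ev) (use cfq cf_keys in auto)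
    ultimately show False using evq by simp
  qed
qed

lemma free_SFG:
  assumes "free G" shows "SFG K sm G"
  unfolding SFG_def
proof (intro allI impI)
  fix n S c x assume H: "is_poly_n K n S c \<and> poly_nonzero S c \<and> inj_on x {..<n} \<and> x ` {..<n} \<subseteq> G"
  have finS: "finite S" and S0: "{#} \<notin> S" and Sv: "\<And>m. m \<in> S \<Longrightarrow> set_mset m \<subseteq> {..<n}"
    and cK: "\<And>m. m \<in> S \<Longrightarrow> c m \<in> K"
    using H unfolding is_poly_n_def by auto
  define q :: "(nat,'c) fp" where "q = (\<Sum>m\<in>S. Poly_Mapping.single m (inv emb (c m)))"
  have lq: "Poly_Mapping.lookup q m = (if m \<in> S then inv emb (c m) else 0)" for m
    unfolding q_def lookup_sum using finS
    by (simp add: lookup_single when_def)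
  have kq: "Poly_Mapping.keys q \<subseteq> S" using lq by (auto simp: in_keys_iff split: if_splits)
  have cfq: "cf q" using lq S0 by (simp add: cf_def)
  have vq: "vars q \<subseteq> {..<n}" using kq Sv unfolding vars_def by blast
  have "q \<noteq> 0"
  proof
    assume "q = 0"
    obtain m where "m \<in> S" "c m \<noteq> 0" using H unfolding poly_nonzero_def by blast
    then have "inv emb (c m) = 0" using lq[of m] \<open>q = 0\<close> by simp
    then have "c m = 0" using emb_inv[OF cK[OF \<open>m \<in> S\<close>]] emb_zero by simp
    with \<open>c m \<noteq> 0\<close> show False by simp
  qed
  have pe: "poly_eval sm S c x = ev smc x q"
    by (rule poly_eval_ev) (use finS kq S0 lq cK emb_inv in auto)
  define y where "y = inv_into {..<n} x"
  define p :: "('a,'c) fp" where "p = ev smR (\<lambda>v. Var (x v)) q"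
  have cfp: "cf p" unfolding p_def by (rule cf_rename)
  have vp: "vars p \<subseteq> G" using vars_rename[of x q] vq H unfolding p_def by blast
  have evp: "ev smc id p = ev smc x q" unfolding p_def by (simp add: ev_rename[OF laws_smc])
  have pback: "ev smR (\<lambda>v. Var (y v)) p = q"
    unfolding p_def
    by (rule rename_back[OF cfq]) (use vq H in \<open>auto simp: y_def inv_into_f_f\<close>)
  have "p \<noteq> 0" using pback \<open>q \<noteq> 0\<close> by auto
  then have "ev smc id p \<noteq> 0" using assms cfp vp unfolding free_def by blast
  then show "poly_eval sm S c x \<noteq> 0" using pe evp by simp
qed

end

lemma sq_eqpoll: "infinite A \<Longrightarrow> A \<times> A \<approx> A"
  by (simp add: eqpoll_iff_card_of_ordIso card_of_Times_same_infinite)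

lemma nat_times_eqpoll: assumes "infinite (A::'i set)" shows "(UNIV::nat set) \<times> A \<approx> A"
proof (rule lepoll_antisym)
  have "(UNIV::nat set) \<times> A \<lesssim> A \<times> A"
    by (rule times_lepoll_mono) (use assms infinite_le_lepoll lepoll_refl in auto)
  also have "A \<times> A \<lesssim> A" by (rule eqpoll_imp_lepoll[OF sq_eqpoll[OF assms]])
  finally show "(UNIV::nat set) \<times> A \<lesssim> A" .
  have "A \<approx> {0::nat} \<times> A" by (rule eqpoll_sym[OF times_singleton_eqpoll])
  also have "{0::nat} \<times> A \<lesssim> (UNIV::nat set) \<times> A" by (rule subset_imp_lepoll) auto
  finally show "A \<lesssim> (UNIV::nat set) \<times> A" .
qed

lemma times_nat_eqpoll: assumes "infinite (A::'i set)" shows "A \<times> (UNIV::nat set) \<approx> A"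
  by (rule eqpoll_trans[OF times_commute_eqpoll nat_times_eqpoll[OF assms]])

lemma triple_lepoll: assumes "infinite (A::'i set)" shows "A \<times> A \<times> (UNIV::nat set) \<lesssim> A"
proof -
  have "A \<times> A \<times> (UNIV::nat set) \<approx> A \<times> A"
    by (rule times_eqpoll_cong) (use times_nat_eqpoll[OF assms] eqpoll_refl in auto)
  also have "A \<times> A \<approx> A" by (rule sq_eqpoll[OF assms])
  finally show ?thesis by (rule eqpoll_imp_lepoll)
qed

lemma forms_eqpoll: assumes "infinite (A::'i set)"
  shows "{k} \<times> ((UNIV::nat set) \<times> A) \<times> (UNIV::nat set) \<approx> A"
proof -
  have "{k} \<times> ((UNIV::nat set) \<times> A) \<times> (UNIV::nat set) \<approx> ((UNIV::nat set) \<times> A) \<times> (UNIV::nat set)"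
    by (rule times_singleton_eqpoll)
  also have "\<dots> \<approx> A \<times> (UNIV::nat set)"
    by (rule times_eqpoll_cong) (use nat_times_eqpoll[OF assms] eqpoll_refl in auto)
  also have "\<dots> \<approx> A" by (rule times_nat_eqpoll[OF assms])
  finally show ?thesis .
qed


context setting
begin

lemma frac_K: "complex_of_real (1 / (real n + 2)) \<in> K"
  using emb_frac[of n] K_eq by (metis rangeI)

lemma zero_K: "0 \<in> K" using emb_zero K_eq by (metis rangeI)

lemma sm_zero: "sm 0 e = 0"
  using laws_zero(1)[OF laws_smc, of e] emb_zero by (simp add: smc_def)

lemma cont_sm: "continuous_on (K \<times> UNIV) (\<lambda>p::complex \<times> 'a. sm (fst p) (snd p))"
  using TA by (simp add: topological_algebra_def)

lemma cont_add: "continuous_on UNIV (\<lambda>p::'a \<times> 'a. fst p + snd p)"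
  using TA by (simp add: topological_algebra_def)

lemma cont_mult: "continuous_on UNIV (\<lambda>p::'a \<times> 'a. fst p * snd p)"
  using TA by (simp add: topological_algebra_def)

lemma frac_lim: "(\<lambda>j. complex_of_real (1 / (real j + 2))) \<longlonglongrightarrow> 0"
proof -
  have "(\<lambda>j. 1 / (real j + 2)) \<longlonglongrightarrow> 0"
  proof -
    have "(\<lambda>j. 1 / (real (j + 2))) \<longlonglongrightarrow> 0"
      using LIMSEQ_ignore_initial_segment[OF lim_inverse_n', of 2] by (simp add: inverse_eq_divide)
    then show ?thesis by (simp add: add.commute)
  qed
  from tendsto_of_real[OF this, where 'a=complex] show ?thesis by simp
qed

lemma scal_lim: "(\<lambda>j. sm (complex_of_real (1 / (real j + 2))) e) \<longlonglongrightarrow> 0"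
proof -
  have g: "(\<lambda>j. (complex_of_real (1 / (real j + 2)), e)) \<longlonglongrightarrow> (0, e)"
    by (intro tendsto_Pair frac_lim tendsto_const)
  have "(\<lambda>j. sm (fst (complex_of_real (1 / (real j + 2)), e)) (snd (complex_of_real (1 / (real j + 2)), e))) \<longlonglongrightarrow> sm (fst (0::complex, e)) (snd (0::complex, e))"
    using continuous_on_tendsto_compose[OF cont_sm g] frac_K zero_K by auto
  then show ?thesis by (simp add: sm_zero)
qed

lemma add_lim: "(d \<longlonglongrightarrow> 0) \<Longrightarrow> ((\<lambda>n. a + d n) \<longlonglongrightarrow> (a::'a))"
proof -
  assume d: "d \<longlonglongrightarrow> 0"
  have g: "(\<lambda>n. (a, d n)) \<longlonglongrightarrow> (a, 0)" by (intro tendsto_Pair d tendsto_const)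
  have "(\<lambda>n. fst (a, d n) + snd (a, d n)) \<longlonglongrightarrow> fst (a, 0::'a) + snd (a, 0::'a)"
    using continuous_on_tendsto_compose[OF cont_add g] by auto
  then show ?thesis by simp
qed

lemma closure_bin:
  assumes "continuous_on UNIV (\<lambda>p::'a \<times> 'a. f (fst p) (snd p))"
    and "\<And>x y. x \<in> B \<Longrightarrow> y \<in> B \<Longrightarrow> f x y \<in> B"
    and "x \<in> closure B" "y \<in> closure B"
  shows "f x y \<in> closure B"
proof -
  have "(\<lambda>p::'a \<times> 'a. f (fst p) (snd p)) ` closure (B \<times> B) \<subseteq> closure B"
    by (rule image_closure_subset[OF continuous_on_subset[OF assms(1) subset_UNIV]])
       (use assms(2) in \<open>auto intro: closure_subset[THEN subsetD]\<close>)
  moreover have "(x, y) \<in> closure (B \<times> B)" using assms(3,4) by (simp add: closure_Times)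
  ultimately have "(\<lambda>p::'a \<times> 'a. f (fst p) (snd p)) (x, y) \<in> closure B"
    by (meson image_subset_iff)
  then show ?thesis by simp
qed

lemma closure_un:
  assumes "continuous_on UNIV (f::'a \<Rightarrow> 'a)"
    and "\<And>x. x \<in> B \<Longrightarrow> f x \<in> B"
    and "x \<in> closure B"
  shows "f x \<in> closure B"
proof -
  have "f ` closure B \<subseteq> closure B"
    by (rule image_closure_subset[OF continuous_on_subset[OF assms(1) subset_UNIV]])
       (use assms(2) in \<open>auto intro: closure_subset[THEN subsetD]\<close>)
  then show ?thesis using assms(3) by auto
qed

lemma cont_scal: "c \<in> K \<Longrightarrow> continuous_on UNIV (\<lambda>x::'a. sm c x)"
  by (rule continuous_on_compose2[OF cont_sm, of UNIV "\<lambda>x. (c, x)", simplified])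
     (auto intro!: continuous_intros)

lemma sm_minus_one: "sm (-1) y = - y"
proof -
  have "-1 \<in> K" using K_eq emb_add emb_one emb_zero by (metis add.right_inverse add_eq_0_iff rangeI)
  obtain a where a: "emb a = -1" using \<open>-1 \<in> K\<close> K_eq by auto
  have "emb (a + 1) = 0" using a emb_add emb_one by simp
  then have "a + 1 = 0" using emb_inj emb_zero by (metis injD)
  have "smc (a + 1) y = smc a y + smc 1 y" by (rule laws_D(1)[OF laws_smc])
  then have "0 = sm (-1) y + y" using \<open>a + 1 = 0\<close> a laws_zero(1)[OF laws_smc] laws_D(4)[OF laws_smc]
    by (simp add: smc_def)
  then show ?thesis by (simp add: eq_neg_iff_add_eq_0 add.commute)
qed

lemma closure_subalg:
  assumes "is_subalg K sm B" shows "is_subalg K sm (closure B)"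
  unfolding is_subalg_def
proof (intro conjI ballI)
  have B: "0 \<in> B" "\<And>x y. x \<in> B \<Longrightarrow> y \<in> B \<Longrightarrow> x + y \<in> B" "\<And>x y. x \<in> B \<Longrightarrow> y \<in> B \<Longrightarrow> x * y \<in> B"
    "\<And>c x. c \<in> K \<Longrightarrow> x \<in> B \<Longrightarrow> sm c x \<in> B"
    using assms unfolding is_subalg_def by auto
  show "0 \<in> closure B" using B(1) closure_subset by blast
  fix x y assume xy: "x \<in> closure B" "y \<in> closure B"
  show "x + y \<in> closure B"
    by (rule closure_bin[where f="(+)"]) (use cont_add B(2) xy in auto)
  show "x * y \<in> closure B"
    by (rule closure_bin[where f="(*)"]) (use cont_mult B(3) xy in auto)
  have m1: "-1 \<in> K" using K_eq emb_add emb_one emb_zero by (metis add.right_inverse add_eq_0_iff rangeI)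
  have "sm (-1) y \<in> closure B"
    by (rule closure_un[OF cont_scal[OF m1]]) (use B(4) m1 xy in auto)
  then have "x + sm (-1) y \<in> closure B"
    by (intro closure_bin[where f="(+)"]) (use cont_add B(2) xy in auto)
  then show "x - y \<in> closure B" by (simp add: sm_minus_one)
next
  fix c x assume "c \<in> K" "x \<in> closure B"
  then show "sm c x \<in> closure B"
    using assms unfolding is_subalg_def by (intro closure_un[OF cont_scal]) auto
qed

end

locale constr = setting K sm emb
  for K and sm :: "complex \<Rightarrow> 'a::{comm_ring,first_countable_topology} \<Rightarrow> 'a"
    and emb :: "'c::field_char_0 \<Rightarrow> complex" +
  fixes A :: "'i set" and F :: "'a set"
  assumes infA: "infinite A" and sfgF: "SFG K sm F" and FA: "F \<approx> A"
begin

definition V :: "(nat \<times> 'i) set" where "V = UNIV \<times> A"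

definition iota :: "nat \<times> 'i \<Rightarrow> 'a" where "iota = (SOME f. bij_betw f V F)"

lemma iota_bij: "bij_betw iota V F"
proof -
  have "V \<approx> F" unfolding V_def
    using eqpoll_trans[OF nat_times_eqpoll[OF infA] eqpoll_sym[OF FA]] .
  then have "\<exists>f. bij_betw f V F" by (simp add: eqpoll_def)
  then show ?thesis unfolding iota_def by (rule someI_ex)
qed

lemma iota_inv: "v \<in> V \<Longrightarrow> inv_into V iota (iota v) = v"
  using iota_bij by (simp add: bij_betw_def inv_into_f_f)

lemma iota_in: "v \<in> V \<Longrightarrow> iota v \<in> F"
  using iota_bij by (auto simp: bij_betw_def)

definition Tr :: "('i \<times> 'i \<times> nat) set" where "Tr = A \<times> A \<times> UNIV"

definition pi :: "'i \<times> 'i \<times> nat \<Rightarrow> 'i" where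
  "pi = (SOME f. inj_on f Tr \<and> f ` Tr \<subseteq> A)"

lemma pi_props: "inj_on pi Tr" "pi ` Tr \<subseteq> A"
proof -
  have "\<exists>f. inj_on f Tr \<and> f ` Tr \<subseteq> A"
    using triple_lepoll[OF infA] unfolding lepoll_def Tr_def by blast
  then have "inj_on pi Tr \<and> pi ` Tr \<subseteq> A" unfolding pi_def by (rule someI_ex)
  then show "inj_on pi Tr" "pi ` Tr \<subseteq> A" by auto
qed

definition child :: "nat \<times> 'i \<Rightarrow> 'i \<Rightarrow> nat \<Rightarrow> nat \<times> 'i" where
  "child v k n = (Suc (fst v), pi (snd v, k, n))"

lemma child_V: "v \<in> V \<Longrightarrow> k \<in> A \<Longrightarrow> child v k n \<in> V"
  using pi_props(2) by (auto simp: child_def V_def Tr_def)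

definition B0 :: "nat \<Rightarrow> 'a set" where
  "B0 = (SOME B. (\<forall>i. open (B i)) \<and> (\<forall>i. 0 \<in> B i) \<and> (\<forall>G. (\<forall>n. G n \<in> B n) \<longrightarrow> G \<longlonglongrightarrow> 0))"

lemma B0_props: "\<And>i. open (B0 i)" "\<And>i. 0 \<in> B0 i" "\<And>G. (\<forall>n. G n \<in> B0 n) \<Longrightarrow> G \<longlonglongrightarrow> 0"
proof -
  obtain B :: "nat \<Rightarrow> 'a set" where "\<And>i. open (B i)" "\<And>i. 0 \<in> B i" "\<And>G. (\<forall>n. G n \<in> B n) \<Longrightarrow> G \<longlonglongrightarrow> 0"
    by (rule first_countable_topology_class.countable_basis[of 0]) blast
  then have "\<exists>B::nat \<Rightarrow> 'a set. (\<forall>i. open (B i)) \<and> (\<forall>i. 0 \<in> B i) \<and> (\<forall>G. (\<forall>n. G n \<in> B n) \<longrightarrow> G \<longlonglongrightarrow> 0)"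
    by blast
  then have "(\<forall>i. open (B0 i)) \<and> (\<forall>i. 0 \<in> B0 i) \<and> (\<forall>G. (\<forall>n. G n \<in> B0 n) \<longrightarrow> G \<longlonglongrightarrow> 0)"
    unfolding B0_def by (rule someI_ex)
  then show "\<And>i. open (B0 i)" "\<And>i. 0 \<in> B0 i" "\<And>G. (\<forall>n. G n \<in> B0 n) \<Longrightarrow> G \<longlonglongrightarrow> 0" by auto
qed

definition J :: "'a \<Rightarrow> nat \<Rightarrow> nat" where
  "J e n = (SOME j. sm (complex_of_real (1 / (real j + 2))) e \<in> B0 n)"

lemma J_prop: "sm (complex_of_real (1 / (real (J e n) + 2))) e \<in> B0 n"
proof -
  have "eventually (\<lambda>j. sm (complex_of_real (1 / (real j + 2))) e \<in> B0 n) sequentially"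
    using scal_lim[of e] B0_props(1,2) by (simp add: tendsto_def)
  then have "\<exists>j. sm (complex_of_real (1 / (real j + 2))) e \<in> B0 n"
    by (meson eventually_sequentially order_refl)
  then show ?thesis unfolding J_def by (rule someI_ex)
qed

type_synonym ('i2) trip = "'i2 \<times> (nat \<times> 'i2) \<times> nat"

definition jj :: "'i \<times> (nat \<times> 'i) \<times> nat \<Rightarrow> nat" where
  "jj t = (case t of (k, v, n) \<Rightarrow> J (iota (child v k n)) n)"

definition tt :: "'i \<times> (nat \<times> 'i) \<times> nat \<Rightarrow> 'c" where
  "tt t = 1 / (of_nat (jj t) + 2)"

definition L :: "'i \<times> (nat \<times> 'i) \<times> nat \<Rightarrow> ('a, 'c) fp" where
  "L t = (case t of (k, v, n) \<Rightarrow> Var (iota v) + smR (tt t) (Var (iota (child v k n))))"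

definition hf :: "'i \<times> (nat \<times> 'i) \<times> nat \<Rightarrow> 'a" where
  "hf t = (case t of (k, v, n) \<Rightarrow> iota v + smc (tt t) (iota (child v k n)))"

definition Psi :: "nat \<Rightarrow> 'i \<Rightarrow> ('i \<times> (nat \<times> 'i) \<times> nat, 'c) fp" where
  "Psi = rec_nat (\<lambda>a. 0) (\<lambda>k P b. if b \<in> pi ` Tr then
      (case inv_into Tr pi b of (a, k', n) \<Rightarrow> smR (of_nat (jj (k', (k, a), n)) + 2) (Var (k', (k, a), n) - P a))
     else 0)"

lemma Psi_0: "Psi 0 a = 0" by (simp add: Psi_def)

lemma Psi_Suc: "(a, k', n) \<in> Tr \<Longrightarrow>
  Psi (Suc k) (pi (a, k', n)) = smR (of_nat (jj (k', (k, a), n)) + 2) (Var (k', (k, a), n) - Psi k a)"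
  using pi_props(1) by (simp add: Psi_def inv_into_f_f)

lemma cf_Psi: "cf (Psi k a)"
proof (induction k arbitrary: a)
  case 0 then show ?case by (simp add: Psi_0 cf_zero)
next
  case (Suc k)
  then show ?case
    by (auto simp: Psi_def cf_zero cf_smR cf_minus cf_Var split: prod.splits)
qed

definition psi :: "'a \<Rightarrow> ('i \<times> (nat \<times> 'i) \<times> nat, 'c) fp" where
  "psi u = (case inv_into V iota u of (k, a) \<Rightarrow> Psi k a)"

lemma cf_psi: "cf (psi u)" by (simp add: psi_def cf_Psi split: prod.splits)

lemma cf_L: "cf (L t)"
  by (simp add: L_def cf_add cf_smR cf_Var split: prod.splits)

definition T :: "('i \<times> (nat \<times> 'i) \<times> nat) set" where "T = A \<times> V \<times> UNIV"

lemma psi_L: assumes "t \<in> T" shows "ev smR psi (L t) = Var t"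
proof -
  obtain k v n where t: "t = (k, v, n)" by (cases t) auto
  obtain l a where v: "v = (l, a)" by (cases v) auto
  have kA: "k \<in> A" and vV: "v \<in> V" and aA: "a \<in> A" using assms t v by (auto simp: T_def V_def)
  have cV: "child v k n \<in> V" using child_V[OF vV kA] .
  have trA: "(a, k, n) \<in> Tr" using kA aA by (simp add: Tr_def)
  have p1: "psi (iota v) = Psi l a" using iota_inv[OF vV] by (simp add: psi_def v)
  have p2: "psi (iota (child v k n)) = smR (of_nat (jj t) + 2) (Var t - Psi l a)"
    using iota_inv[OF cV] Psi_Suc[OF trA, of l] by (simp add: psi_def child_def v t)
  have nz: "(of_nat (jj t) + 2 :: 'c) \<noteq> 0"
    by (metis of_nat_add of_nat_eq_0_iff of_nat_numeral add_is_0 zero_neq_numeral)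
  have "ev smR psi (L t) = psi (iota v) + smR (tt t) (psi (iota (child v k n)))"
    by (simp add: L_def t ev_add[OF laws_smR] ev_smR[OF laws_smR] ev_Var[OF laws_smR])
  also have "\<dots> = Psi l a + smR (tt t * (of_nat (jj t) + 2)) (Var t - Psi l a)"
    by (simp add: p1 p2 laws_D(3)[OF laws_smR])
  also have "tt t * (of_nat (jj t) + 2) = 1" using nz by (simp add: tt_def)
  finally show ?thesis by (simp add: laws_D(4)[OF laws_smR])
qed

lemma hf_L: "hf t = ev smc id (L t)"
  by (simp add: L_def hf_def ev_add[OF laws_smc] ev_smR[OF laws_smc] ev_Var[OF laws_smc] split: prod.splits)

lemma vars_L: "t \<in> T \<Longrightarrow> vars (L t) \<subseteq> F"
proof -
  assume "t \<in> T"
  then obtain k v n where t: "t = (k, v, n)" "k \<in> A" "v \<in> V" by (auto simp: T_def)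
  have "vars (L t) \<subseteq> vars (Var (iota v) :: ('a,'c) fp) \<union> vars (smR (tt t) (Var (iota (child v k n))) :: ('a,'c) fp)"
    unfolding L_def t by (simp add: vars_add)
  also have "\<dots> \<subseteq> {iota v, iota (child v k n)}"
    using vars_smR[of "tt t" "Var (iota (child v k n)) :: ('a,'c) fp"] by (auto simp: vars_Var)
  also have "\<dots> \<subseteq> F" using iota_in t child_V by auto
  finally show ?thesis .
qed

lemma freeF: "free F" by (rule SFG_free[OF sfgF])

lemma Var_inj: "(Var x :: ('v, 'c) fp) = Var y \<Longrightarrow> x = y"
proof -
  assume h: "(Var x :: ('v, 'c) fp) = Var y"
  have "Poly_Mapping.lookup (Var x :: ('v, 'c) fp) {#x#} = 1" by (simp add: Var_def)
  then have "Poly_Mapping.lookup (Var y :: ('v, 'c) fp) {#x#} = 1" using h by simp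
  then show "x = y" by (auto simp: Var_def lookup_single when_def split: if_splits)
qed

end

context setting
begin

lemma free_mono: "free G \<Longrightarrow> G' \<subseteq> G \<Longrightarrow> free G'"
  unfolding free_def by blast

end

context constr
begin

lemma hf_inj: "inj_on hf T"
proof (rule inj_onI)
  fix s t assume s: "s \<in> T" and t: "t \<in> T" and eq: "hf s = hf t"
  have "ev smc id (L s - L t) = 0" using eq by (simp add: ev_minus[OF laws_smc] hf_L)
  moreover have "cf (L s - L t)" by (intro cf_minus cf_L)
  moreover have "vars (L s - L t) \<subseteq> F" using vars_minus[of "L s" "L t"] vars_L[OF s] vars_L[OF t] by auto
  ultimately have "L s - L t = 0" using freeF unfolding free_def by blast
  then have "L s = L t" by simp
  then have "ev smR psi (L s) = ev smR psi (L t)" by simp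
  then have "(Var s :: ('i \<times> (nat \<times> 'i) \<times> nat, 'c) fp) = Var t" using psi_L[OF s] psi_L[OF t] by simp
  then show "s = t" by (rule Var_inj)
qed

lemma free_H: "free (hf ` T)"
  unfolding free_def
proof (intro allI impI)
  fix p :: "('a,'c) fp" assume H: "cf p \<and> vars p \<subseteq> hf ` T \<and> ev smc id p = 0"
  define g where "g = inv_into T hf"
  have hg: "hf (g u) = u" if "u \<in> hf ` T" for u using that by (simp add: g_def f_inv_into_f)
  have gT: "g u \<in> T" if "u \<in> hf ` T" for u using that by (simp add: g_def inv_into_into)
  define q :: "('i \<times> (nat \<times> 'i) \<times> nat, 'c) fp" where "q = ev smR (\<lambda>u. Var (g u)) p"
  have cfq: "cf q" unfolding q_def by (rule cf_rename)
  have vq: "vars q \<subseteq> T" using vars_rename[of g p] H gT unfolding q_def by blast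
  have pb: "ev smR (\<lambda>t. Var (hf t)) q = p"
    unfolding q_def by (rule rename_back) (use H hg in auto)
  define r where "r = ev smR L q"
  have cfr: "cf r" unfolding r_def by (rule cf_ev_R[OF cf_L])
  have vr: "vars r \<subseteq> F" using vars_ev_R[of L q] vq vars_L unfolding r_def by blast
  have "ev smc id r = ev smc (\<lambda>t. ev smc id (L t)) q" unfolding r_def by (rule ev_comp[OF laws_smc cf_L])
  also have "\<dots> = ev smc hf q" by (simp add: hf_L[symmetric])
  also have "\<dots> = ev smc id (ev smR (\<lambda>t. Var (hf t)) q)" by (simp add: ev_rename[OF laws_smc])
  also have "\<dots> = 0" using pb H by simp
  finally have "r = 0" using freeF cfr vr unfolding free_def by blast
  have "ev smR psi r = ev smR (\<lambda>t. ev smR psi (L t)) q" unfolding r_def by (rule ev_comp[OF laws_smR cf_L])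
  also have "\<dots> = ev smR Var q" by (rule ev_cong) (use vq psi_L in auto)
  also have "\<dots> = q" by (rule ev_Var_id[OF cfq])
  finally have "q = 0" using \<open>r = 0\<close> by simp
  then show "p = 0" using pb by simp
qed

definition Fk :: "'i \<Rightarrow> 'a set" where "Fk k = hf ` ({k} \<times> V \<times> UNIV)"

lemma Fk_sub: "k \<in> A \<Longrightarrow> Fk k \<subseteq> hf ` T"
  unfolding Fk_def T_def by auto

lemma Fk_SFG: "k \<in> A \<Longrightarrow> SFG K sm (Fk k)"
  by (rule free_SFG[OF free_mono[OF free_H Fk_sub]])

lemma Fk_eqpoll: assumes "k \<in> A" shows "Fk k \<approx> A"
proof -
  have "inj_on hf ({k} \<times> V \<times> UNIV)"
    by (rule inj_on_subset[OF hf_inj]) (use assms in \<open>auto simp: T_def\<close>)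
  then have "{k} \<times> V \<times> (UNIV::nat set) \<approx> Fk k" unfolding Fk_def eqpoll_def bij_betw_def by (intro exI[of _ hf]) simp
  then show ?thesis using forms_eqpoll[OF infA, of k] unfolding V_def
    by (meson eqpoll_sym eqpoll_trans)
qed

lemma Fk_disj: "k \<in> A \<Longrightarrow> k' \<in> A \<Longrightarrow> k \<noteq> k' \<Longrightarrow> Fk k \<inter> Fk k' = {}"
  using hf_inj unfolding Fk_def inj_on_def T_def by fastforce

lemma gen_inter:
  assumes "k \<in> A" "k' \<in> A" "k \<noteq> k'"
  shows "gen_alg K sm (Fk k) \<inter> gen_alg K sm (Fk k') = {0}"
proof
  show "{0} \<subseteq> gen_alg K sm (Fk k) \<inter> gen_alg K sm (Fk k')"
    using gen_alg_subalg unfolding is_subalg_def by blast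
  show "gen_alg K sm (Fk k) \<inter> gen_alg K sm (Fk k') \<subseteq> {0}"
  proof
    fix y assume "y \<in> gen_alg K sm (Fk k) \<inter> gen_alg K sm (Fk k')"
    then have "y \<in> Pol (Fk k)" "y \<in> Pol (Fk k')" using gen_alg_Pol by blast+
    then obtain p q where p: "y = ev smc id p" "cf p" "vars p \<subseteq> Fk k"
      and q: "y = ev smc id q" "cf q" "vars q \<subseteq> Fk k'" unfolding Pol_def by blast
    have "ev smc id (p - q) = 0" using p q by (simp add: ev_minus[OF laws_smc])
    moreover have "cf (p - q)" using p q by (simp add: cf_minus)
    moreover have "vars (p - q) \<subseteq> hf ` T"
      using vars_minus[of p q] p q Fk_sub assms by blast
    ultimately have "p - q = 0" using free_H unfolding free_def by blast
    then have pq: "p = q" by simp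
    have "p = 0"
    proof (rule ccontr)
      assume "p \<noteq> 0"
      then obtain m where m: "m \<in> Poly_Mapping.keys p" by (metis keys_eq_empty ex_in_conv)
      then have "m \<noteq> {#}" using p(2) cf_keys by auto
      then obtain u where "u \<in># m" by (metis multiset_nonemptyE)
      then have "u \<in> vars p" using m by (auto simp: vars_def)
      then have "u \<in> Fk k \<inter> Fk k'" using p q pq by auto
      then show False using Fk_disj[OF assms] by auto
    qed
    then show "y \<in> {0}" using p by simp
  qed
qed

lemma Fk_in_gen: assumes "k \<in> A" shows "Fk k \<subseteq> gen_alg K sm F"
proof
  fix h assume "h \<in> Fk k"
  then obtain v n where v: "v \<in> V" and h: "h = hf (k, v, n)" unfolding Fk_def by auto
  have S: "is_subalg K sm (gen_alg K sm F)" by (rule gen_alg_subalg)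
  have a: "iota v \<in> gen_alg K sm F" using iota_in[OF v] gen_alg_sub by blast
  have b: "iota (child v k n) \<in> gen_alg K sm F" using iota_in[OF child_V[OF v assms]] gen_alg_sub by blast
  have c: "emb (tt (k, v, n)) \<in> K" using K_eq by auto
  have "sm (emb (tt (k, v, n))) (iota (child v k n)) \<in> gen_alg K sm F"
    using S b c unfolding is_subalg_def by blast
  then show "h \<in> gen_alg K sm F" using S a unfolding h hf_def smc_def is_subalg_def by auto
qed

lemma F_closure: assumes "k \<in> A" shows "F \<subseteq> closure (gen_alg K sm (Fk k))"
proof
  fix f assume f: "f \<in> F"
  define v where "v = inv_into V iota f"
  have vV: "v \<in> V" and fv: "iota v = f"
    using f iota_bij unfolding v_def bij_betw_def by (auto simp: inv_into_into f_inv_into_f)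
  define d where "d n = sm (complex_of_real (1 / (real (jj (k, v, n)) + 2))) (iota (child v k n))" for n
  have "d n \<in> B0 n" for n unfolding d_def jj_def using J_prop by simp
  then have "d \<longlonglongrightarrow> 0" using B0_props(3) by blast
  then have lim: "(\<lambda>n. iota v + d n) \<longlonglongrightarrow> iota v" by (rule add_lim)
  have eq: "hf (k, v, n) = iota v + d n" for n
    by (simp add: hf_def d_def smc_def tt_def emb_frac)
  have "hf (k, v, n) \<in> gen_alg K sm (Fk k)" for n
    using gen_alg_sub[of "Fk k"] vV unfolding Fk_def by blast
  then show "f \<in> closure (gen_alg K sm (Fk k))"
    unfolding closure_sequential using lim eq fv by (intro exI[of _ "\<lambda>n. iota v + d n"]) auto
qed

lemma Fk_dense:
  assumes "k \<in> A" "closure (gen_alg K sm F) = UNIV"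
  shows "closure (gen_alg K sm (Fk k)) = UNIV"
proof -
  have "gen_alg K sm F \<subseteq> closure (gen_alg K sm (Fk k))"
    by (rule gen_alg_min[OF closure_subalg[OF gen_alg_subalg] F_closure[OF assms(1)]])
  then have "closure (gen_alg K sm F) \<subseteq> closure (gen_alg K sm (Fk k))"
    by (metis closure_closure closure_mono)
  then show ?thesis using assms(2) by auto
qed

lemma main_constr:
  assumes "closure (gen_alg K sm F) = UNIV" "gen_alg K sm F \<subseteq> M \<union> {0}"
  shows "inf_strongly_dense_algebrable K sm A M"
  unfolding inf_strongly_dense_algebrable_def
proof (intro exI[of _ "\<lambda>k. gen_alg K sm (Fk k)"] conjI ballI impI)
  fix k assume k: "k \<in> A"
  show "dense_free_subalg K sm A (gen_alg K sm (Fk k))"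
    unfolding dense_free_subalg_def
    using Fk_SFG[OF k] Fk_eqpoll[OF k] Fk_dense[OF k assms(1)] by blast
  have "gen_alg K sm (Fk k) \<subseteq> gen_alg K sm F"
    by (rule gen_alg_min[OF gen_alg_subalg Fk_in_gen[OF k]])
  then show "gen_alg K sm (Fk k) \<subseteq> M \<union> {0}" using assms(2) by blast
next
  fix k1 k2 assume "k1 \<in> A" "k2 \<in> A" "k1 \<noteq> k2"
  then show "gen_alg K sm (Fk k1) \<inter> gen_alg K sm (Fk k2) = {0}" by (rule gen_inter)
qed

end

theorem theorem4p7:
  fixes K :: "complex set" and sm :: "complex \<Rightarrow> 'a::{comm_ring,first_countable_topology} \<Rightarrow> 'a"
    and A :: "'i set" and M :: "'a set"
  assumes "K = \<real> \<or> K = UNIV"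
    and "infinite A"
    and "topological_algebra K sm"
    and "alpha_generated K sm A"
  shows "inf_strongly_dense_algebrable K sm A M \<longleftrightarrow> strongly_dense_algebrable K sm A M"
proof
  assume "inf_strongly_dense_algebrable K sm A M"
  then obtain Y where Y: "\<forall>k\<in>A. dense_free_subalg K sm A (Y k) \<and> Y k \<subseteq> M \<union> {0}"
    unfolding inf_strongly_dense_algebrable_def by auto
  obtain k where "k \<in> A" using assms(2) by (metis finite.emptyI ex_in_conv)
  then show "strongly_dense_algebrable K sm A M"
    unfolding strongly_dense_algebrable_def using Y by auto
next
  assume "strongly_dense_algebrable K sm A M"
  then obtain F where F: "SFG K sm F" "F \<approx> A" "closure (gen_alg K sm F) = UNIV"
    "gen_alg K sm F \<subseteq> M \<union> {0}"
    unfolding strongly_dense_algebrable_def dense_free_subalg_def by auto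
  show "inf_strongly_dense_algebrable K sm A M"
    using assms(1)
  proof
    assume K: "K = \<real>"
    interpret C: constr K sm "complex_of_real :: real \<Rightarrow> complex" A F
      apply unfold_locales
      apply (rule assms(3))
      apply (rule of_real_add)
      apply (rule of_real_mult)
      apply (rule of_real_1)
      apply (rule inj_of_real)
      apply (simp add: K Reals_def)
      apply simp
      apply (rule assms(2))
      apply (rule F(1))
      apply (rule F(2))
      done
    show ?thesis by (rule C.main_constr[OF F(3,4)])
  next
    assume K: "K = UNIV"
    interpret C: constr K sm "id :: complex \<Rightarrow> complex" A F
      apply unfold_locales
      apply (rule assms(3))
      apply simp
      apply simp
      apply simp
      apply simp
      apply (simp add: K)
      apply simp
      apply (rule assms(2))
      apply (rule F(1))
      apply (rule F(2))
      done
    show ?thesis by (rule C.main_constr[OF F(3,4)])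
  qed
qed

end
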